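(* In the setting below, let $F_1,\dots,F_n\in K_w[\mathcal G\oplus\mathcal H]$ be nonzero, let $f_i$ be the initial term of $F_i$, and assume $j(F_1,\dots,F_n)\ne0$. Let $\Phi=\sum_{\mathbf k\in\mathbb Z^n}\phi_{\mathbf k}\mathbf x^{\mathbf k}$ be a formal series with coefficients $\phi_{\mathbf k}\in K_w[\mathcal G]$. Then $\Phi(x_1,\dots,x_n)\in K_w^{\mathbf f}[\mathcal G\oplus\mathcal H]$ if and only if $\Phi(f_1,\dots,f_n)=\sum_{\mathbf k}\phi_{\mathbf k}f_1^{k_1}\cdots f_n^{k_n}$ strictly converges in $K_w[\mathcal G\oplus\mathcal H]$; and if these equivalent conditions hold, then $\Phi(F_1,\dots,F_n)=\sum_{\mathbf k}\phi_{\mathbf k}F_1^{k_1}\cdots F_n^{k_n}$ strictly converges in $K_w[\mathcal G\oplus\mathcal H]$.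
   Context: $K$ is a field. A totally ordered abelian group (TOA-group) is an abelian group with a translation-invariant total order; for a TOA-group $\mathcal A$, $K_w[\mathcal A]$ is the field of formal series $\sum_{a\in\mathcal A}c_at^a$ ($c_a\in K$) with well-ordered support; $\mathrm{ord}$ of a nonzero series is the minimum of its support, and its initial term is the term of that order. A sum strictly converges if each coefficient receives contributions from only finitely many summands and the resulting series has well-ordered support. Setting: $\mathcal G,\mathcal H$ are abelian groups with $\mathcal H\cong\mathbb Z^n$ having basis $e_1,\dots,e_n$, and $\mathcal G\oplus\mathcal H$ carries a total order making it a TOA-group ($\mathcal G$ gets the induced order). Write $x_i=t^{e_i}$ and $\mathbf x^{\mathbf k}=x_1^{k_1}\cdots x_n^{k_n}$; every element of $K_w[\mathcal G\oplus\mathcal H]$ is $\sum_{\mathbf k\in\mathbb Z^n}b_{\mathbf k}\mathbf x^{\mathbf k}$ with $b_{\mathbf k}\in K_w[\mathcal G]$. The nonzero $b_{\mathbf k}\mathbf x^{\mathbf k}$ are its $x$-terms, and the $x$-initial term is the $x$-term of least order. If $F_i$ has $x$-initial term $a_i\mathbf x^{\mathbf b_i}$ with $\mathbf b_i=(b_{i1},\dots,b_{in})$, the Jacobian number is $j(F_1,\dots,F_n)=\det(b_{ij})$. For an injective endomorphism $\rho$ of $\mathcal G\oplus\mathcal H$, the order $\le^\rho$ is $a\le^\rho b\iff\rho(a)\le\rho(b)$, and $K_w^\rho[\mathcal G\oplus\mathcal H]$ is the field of formal series with support well-ordered with respect to $\le^\rho$. If the initial term of $F_i$ is $c_it^{g_i}\mathbf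 x^{\mathbf b_i}$ ($c_i\in K$, $g_i\in\mathcal G$), then $\mathbf f$ denotes the endomorphism of $\mathcal G\oplus\mathcal H$ fixing $\mathcal G$ pointwise with $e_i\mapsto g_i+\sum_jb_{ij}e_j$ (it is injective when $\det(b_{ij})\ne0$), and $K_w^{\mathbf f}=K_w^\rho$ for $\rho=\mathbf f$. *)

theory Defs
  imports "HOL-Analysis.Analysis"
begin

definition supp :: "('a \<Rightarrow> 'k::zero) \<Rightarrow> 'a set" where
  "supp s = {a. s a \<noteq> 0}"

definition wo_on :: "('a \<Rightarrow> 'a \<Rightarrow> bool) \<Rightarrow> 'a set \<Rightarrow> bool" where
  "wo_on le S \<longleftrightarrow> (\<forall>T\<subseteq>S. T \<noteq> {} \<longrightarrow> (\<exists>m\<in>T. \<forall>x\<in>T. le m x))"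

definition toa_order :: "('a::ab_group_add \<Rightarrow> 'a \<Rightarrow> bool) \<Rightarrow> bool" where
  "toa_order le \<longleftrightarrow> (\<forall>a. le a a) \<and> (\<forall>a b. le a b \<and> le b a \<longrightarrow> a = b)
     \<and> (\<forall>a b c. le a b \<and> le b c \<longrightarrow> le a c) \<and> (\<forall>a b. le a b \<or> le b a)
     \<and> (\<forall>a b c. le a b \<longrightarrow> le (a + c) (b + c))"

definition hahn :: "('a \<Rightarrow> 'a \<Rightarrow> bool) \<Rightarrow> ('a \<Rightarrow> 'k::zero) \<Rightarrow> bool" where
  "hahn le s \<longleftrightarrow> wo_on le (supp s)"

definition hone :: "'a::zero \<Rightarrow> 'k::{zero,one}" where
  "hone a = (if a = 0 then 1 else 0)"

text \<open>Cauchy product of formal series (finite sums for well-ordered supports).\<close>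
definition hmul :: "('a::ab_group_add \<Rightarrow> 'k::field) \<Rightarrow> ('a \<Rightarrow> 'k) \<Rightarrow> 'a \<Rightarrow> 'k" where
  "hmul s u a = (\<Sum>b\<in>{b. s b \<noteq> 0 \<and> u (a - b) \<noteq> 0}. s b * u (a - b))"

definition hinv :: "('a::ab_group_add \<Rightarrow> 'a \<Rightarrow> bool) \<Rightarrow> ('a \<Rightarrow> 'k::field) \<Rightarrow> 'a \<Rightarrow> 'k" where
  "hinv le s = (THE u. hahn le u \<and> hmul s u = hone)"

definition hpow :: "('a::ab_group_add \<Rightarrow> 'a \<Rightarrow> bool) \<Rightarrow> ('a \<Rightarrow> 'k::field) \<Rightarrow> int \<Rightarrow> 'a \<Rightarrow> 'k" where
  "hpow le s k = (if 0 \<le> k then (hmul s ^^ nat k) hone else (hmul (hinv le s) ^^ nat (- k)) hone)"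

definition hprod :: "('n::finite \<Rightarrow> 'a::ab_group_add \<Rightarrow> 'k::field) \<Rightarrow> 'a \<Rightarrow> 'k" where
  "hprod S a = (\<Sum>\<alpha>\<in>{\<alpha>. (\<Sum>i\<in>UNIV. \<alpha> i) = a \<and> (\<forall>i. S i (\<alpha> i) \<noteq> 0)}. \<Prod>i\<in>UNIV. S i (\<alpha> i))"

definition ord :: "('a \<Rightarrow> 'a \<Rightarrow> bool) \<Rightarrow> ('a \<Rightarrow> 'k::zero) \<Rightarrow> 'a" where
  "ord le s = (THE a. s a \<noteq> 0 \<and> (\<forall>b. s b \<noteq> 0 \<longrightarrow> le a b))"

definition init_term :: "('a \<Rightarrow> 'a \<Rightarrow> bool) \<Rightarrow> ('a \<Rightarrow> 'k::zero) \<Rightarrow> 'a \<Rightarrow> 'k" where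
  "init_term le s = (\<lambda>a. if a = ord le s then s a else 0)"

definition xterm :: "('g \<times> (int ^ 'n) \<Rightarrow> 'k::zero) \<Rightarrow> int ^ 'n \<Rightarrow> 'g \<times> (int ^ 'n) \<Rightarrow> 'k" where
  "xterm s k = (\<lambda>(g, k'). if k' = k then s (g, k) else 0)"

definition xinit_exp :: "('g \<times> (int ^ 'n) \<Rightarrow> 'g \<times> (int ^ 'n) \<Rightarrow> bool)
    \<Rightarrow> ('g \<times> (int ^ 'n) \<Rightarrow> 'k::zero) \<Rightarrow> int ^ 'n" where
  "xinit_exp le s = (THE k. xterm s k \<noteq> (\<lambda>_. 0) \<and>
      (\<forall>k'. xterm s k' \<noteq> (\<lambda>_. 0) \<longrightarrow> le (ord le (xterm s k)) (ord le (xterm s k'))))"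

definition jacobian_number :: "('g \<times> (int ^ 'n) \<Rightarrow> 'g \<times> (int ^ 'n) \<Rightarrow> bool)
    \<Rightarrow> ('n::finite \<Rightarrow> 'g \<times> (int ^ 'n) \<Rightarrow> 'k::zero) \<Rightarrow> int" where
  "jacobian_number le F = det (\<chi> i j. xinit_exp le (F i) $ j)"

definition zsmult :: "int \<Rightarrow> 'a::ab_group_add \<Rightarrow> 'a" where
  "zsmult k a = (if 0 \<le> k then (((+) a) ^^ nat k) 0 else - ((((+) a) ^^ nat (- k)) 0))"

text \<open>The endomorphism f of G \<oplus> Z^n: fixes G pointwise, e_i \<mapsto> g_i + \<Sum>_j b_ij e_j,
  where t^(g_i) x^(b_i) is the exponent of the initial term of F_i, i.e. (g_i, b_i) = ord F_i.\<close>
definition fmap :: "('g::ab_group_add \<times> (int ^ 'n) \<Rightarrow> 'g \<times> (int ^ 'n) \<Rightarrow> bool)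
    \<Rightarrow> ('n::finite \<Rightarrow> 'g \<times> (int ^ 'n) \<Rightarrow> 'k::zero) \<Rightarrow> 'g \<times> (int ^ 'n) \<Rightarrow> 'g \<times> (int ^ 'n)" where
  "fmap le F = (\<lambda>(g, k). (g, 0) + (\<Sum>i\<in>UNIV. zsmult (k $ i) (ord le (F i))))"

definition embG :: "('g \<Rightarrow> 'k::zero) \<Rightarrow> 'g \<times> (int ^ 'n) \<Rightarrow> 'k" where
  "embG \<phi> = (\<lambda>(g, k). if k = 0 then \<phi> g else 0)"

definition series_sum :: "('i \<Rightarrow> 'a \<Rightarrow> 'k::comm_monoid_add) \<Rightarrow> 'a \<Rightarrow> 'k" where
  "series_sum T a = (\<Sum>i\<in>{i. T i a \<noteq> 0}. T i a)"

definition strictly_converges :: "('a \<Rightarrow> 'a \<Rightarrow> bool) \<Rightarrow> ('i \<Rightarrow> 'a \<Rightarrow> 'k::comm_monoid_add) \<Rightarrow> bool" where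
  "strictly_converges le T \<longleftrightarrow> (\<forall>a. finite {i. T i a \<noteq> 0}) \<and> hahn le (series_sum T)"

definition subst_term :: "('g::ab_group_add \<times> (int ^ 'n) \<Rightarrow> 'g \<times> (int ^ 'n) \<Rightarrow> bool)
    \<Rightarrow> (int ^ 'n \<Rightarrow> 'g \<Rightarrow> 'k::field) \<Rightarrow> ('n::finite \<Rightarrow> 'g \<times> (int ^ 'n) \<Rightarrow> 'k)
    \<Rightarrow> int ^ 'n \<Rightarrow> 'g \<times> (int ^ 'n) \<Rightarrow> 'k" where
  "subst_term le \<phi> S k = hmul (embG (\<phi> k)) (hprod (\<lambda>i. hpow le (S i) (k $ i)))"

end

theory Submission
  imports Defs
begin


definition mon :: "'a::monoid_add set \<Rightarrow> 'a set" where
  "mon E = {sum_list xs | xs. set xs \<subseteq> E}"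

locale toa =
  fixes le :: "'a::ab_group_add \<Rightarrow> 'a \<Rightarrow> bool"
  assumes refl: "le a a" and antisym: "le a b \<Longrightarrow> le b a \<Longrightarrow> a = b"
   and trans: "le a b \<Longrightarrow> le b c \<Longrightarrow> le a c" and total: "le a b \<or> le b a"
   and add_right: "le a b \<Longrightarrow> le (a + c) (b + c)"
begin

abbreviation lt where "lt a b \<equiv> le a b \<and> a \<noteq> b"

lemma add_left: "le a b \<Longrightarrow> le (c + a) (c + b)"
  using add_right[of a b c] by (simp add: add.commute)

lemma le_add: "le a b \<Longrightarrow> le c d \<Longrightarrow> le (a + c) (b + d)"
  by (meson add_left add_right trans)

lemma le_add_cancel: "le (a + c) (b + c) \<longleftrightarrow> le a b"
  using add_right[of "a + c" "b + c" "-c"] add_right[of a b c] by auto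

lemma lt_add_le: "lt a b \<Longrightarrow> le c d \<Longrightarrow> lt (a + c) (b + d)"
proof -
  assume h: "lt a b" "le c d"
  have 1: "le (a + c) (b + d)" using h le_add by blast
  have "a + c \<noteq> b + d"
  proof
    assume eq: "a + c = b + d"
    have "le (b + c) (b + d)" using h add_left by blast
    moreover have "le (b + d) (b + c)" using eq h add_right[of a b c] by simp
    ultimately have "c = d" using antisym[of "b+c" "b+d"] by simp
    then show False using eq h by simp
  qed
  then show ?thesis using 1 by blast
qed

lemma le_neg: "le a b \<Longrightarrow> le (- b) (- a)"
  using add_right[of a b "-a-b"] by (simp add: algebra_simps)

lemma lt_diff: "lt a b \<Longrightarrow> le c d \<Longrightarrow> lt (a - d) (b - c)"
  using lt_add_le[of a b "-d" "-c"] le_neg by simp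

lemma not_le: "\<not> le a b \<Longrightarrow> lt b a"
  using total[of a b] by blast

lemma lt_trans: "lt a b \<Longrightarrow> lt b c \<Longrightarrow> lt a c"
  using trans[of a b c] antisym[of a b] by blast

lemma lt_le_trans: "lt a b \<Longrightarrow> le b c \<Longrightarrow> lt a c"
  using trans[of a b c] antisym[of a b] by blast

lemma le_lt_trans: "le a b \<Longrightarrow> lt b c \<Longrightarrow> lt a c"
  using trans[of a b c] antisym[of b c] by blast

subsection \<open>Well-ordered sets\<close>

lemma wo_subset: "wo_on le S \<Longrightarrow> T \<subseteq> S \<Longrightarrow> wo_on le T"
  unfolding wo_on_def by blast

lemma wo_image: "wo_on le S \<Longrightarrow> (\<And>x y. x \<in> S \<Longrightarrow> y \<in> S \<Longrightarrow> le x y \<Longrightarrow> le (f x) (f y))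
   \<Longrightarrow> wo_on le (f ` S)"
  unfolding wo_on_def
proof (intro allI impI)
  fix T assume wo: "\<forall>T\<subseteq>S. T \<noteq> {} \<longrightarrow> (\<exists>m\<in>T. \<forall>x\<in>T. le m x)"
    and mono: "\<And>x y. x \<in> S \<Longrightarrow> y \<in> S \<Longrightarrow> le x y \<Longrightarrow> le (f x) (f y)"
    and T: "T \<subseteq> f ` S" "T \<noteq> {}"
  have "S \<inter> f -` T \<subseteq> S" "S \<inter> f -` T \<noteq> {}" using T by auto
  then obtain m where m: "m \<in> S \<inter> f -` T" "\<forall>x\<in>S \<inter> f -` T. le m x" using wo by meson
  show "\<exists>m\<in>T. \<forall>x\<in>T. le m x"
  proof (intro bexI[of _ "f m"] ballI)
    fix x assume "x \<in> T"
    then obtain y where "y \<in> S" "x = f y" using T by auto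
    then show "le (f m) x" using m mono \<open>x \<in> T\<close> by auto
  qed (use m in auto)
qed

lemma wo_translate: "wo_on le S \<Longrightarrow> wo_on le ((\<lambda>x. x + c) ` S)"
  by (rule wo_image) (auto intro: add_right)

lemma wo_pullback: "wo_on le (f ` S) \<Longrightarrow> wo_on (\<lambda>a b. le (f a) (f b)) S"
  unfolding wo_on_def
proof (intro allI impI)
  fix T assume wo: "\<forall>T\<subseteq>f ` S. T \<noteq> {} \<longrightarrow> (\<exists>m\<in>T. \<forall>x\<in>T. le m x)" and T: "T \<subseteq> S" "T \<noteq> {}"
  then obtain m where "m \<in> f ` T" "\<forall>x\<in>f ` T. le m x"
    by (metis image_is_empty image_mono)
  then show "\<exists>m\<in>T. \<forall>x\<in>T. le (f m) (f x)" by auto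
qed

lemma wo_pushforward: "wo_on (\<lambda>a b. le (f a) (f b)) S \<Longrightarrow> wo_on le (f ` S)"
  unfolding wo_on_def
proof (intro allI impI)
  fix T assume wo: "\<forall>T\<subseteq>S. T \<noteq> {} \<longrightarrow> (\<exists>m\<in>T. \<forall>x\<in>T. le (f m) (f x))" and T: "T \<subseteq> f ` S" "T \<noteq> {}"
  have "S \<inter> f -` T \<subseteq> S" "S \<inter> f -` T \<noteq> {}" using T by auto
  then obtain m where "m \<in> S \<inter> f -` T" "\<forall>x\<in>S \<inter> f -` T. le (f m) (f x)" using wo by meson
  then show "\<exists>m\<in>T. \<forall>x\<in>T. le m x" using T by (intro bexI[of _ "f m"]) auto
qed

lemma wo_empty: "wo_on le {}"
  unfolding wo_on_def by auto

lemma wo_single: "wo_on le {p}"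
  unfolding wo_on_def using refl by (auto dest!: subset_singletonD)

lemma wo_Un: "wo_on le A \<Longrightarrow> wo_on le B \<Longrightarrow> wo_on le (A \<union> B)"
  unfolding wo_on_def
proof (intro allI impI)
  fix T assume A: "\<forall>T\<subseteq>A. T \<noteq> {} \<longrightarrow> (\<exists>m\<in>T. \<forall>x\<in>T. le m x)"
    and B: "\<forall>T\<subseteq>B. T \<noteq> {} \<longrightarrow> (\<exists>m\<in>T. \<forall>x\<in>T. le m x)" and T: "T \<subseteq> A \<union> B" "T \<noteq> {}"
  show "\<exists>m\<in>T. \<forall>x\<in>T. le m x"
  proof (cases "T \<inter> A = {}")
    case True
    then have "T \<subseteq> B" using T by auto
    then show ?thesis using B T by blast
  next
    case False
    then obtain a where a: "a \<in> T \<inter> A" "\<forall>x\<in>T \<inter> A. le a x" using A by (meson inf_le2)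
    show ?thesis
    proof (cases "T \<inter> B = {}")
      case True
      then have "T \<subseteq> A" using T by auto
      then show ?thesis using A T by blast
    next
      case False
      then obtain b where b: "b \<in> T \<inter> B" "\<forall>x\<in>T \<inter> B. le b x" using B by (meson inf_le2)
      show ?thesis
      proof (cases "le a b")
        case True
        then show ?thesis using a b T trans[of a b] by (intro bexI[of _ a]) auto
      next
        case False
        then have "le b a" using total by blast
        then show ?thesis using a b T trans[of b a] by (intro bexI[of _ b]) auto
      qed
    qed
  qed
qed

lemma wo_finite_UN: "finite I \<Longrightarrow> (\<And>i. i \<in> I \<Longrightarrow> wo_on le (S i)) \<Longrightarrow> wo_on le (\<Union>i\<in>I. S i)"
  by (induction I rule: finite_induct) (auto intro: wo_Un wo_empty)

lemma dec_chain: "(\<And>n. lt (s (Suc n)) (s n)) \<Longrightarrow> i < j \<Longrightarrow> lt (s j) (s i)"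
proof (induction j)
  case 0 then show ?case by simp
next
  case (Suc j)
  then show ?case
    by (metis less_Suc_eq lt_trans)
qed

lemma wo_no_dec: "wo_on le S \<Longrightarrow> (\<And>n. s n \<in> S) \<Longrightarrow> (\<And>n. lt (s (Suc n)) (s n)) \<Longrightarrow> False"
proof -
  assume wo: "wo_on le S" and sS: "\<And>n. s n \<in> S" and dec: "\<And>n. lt (s (Suc n)) (s n)"
  have "range s \<subseteq> S" "range s \<noteq> {}" using sS by auto
  then obtain m where "m \<in> range s" "\<forall>x\<in>range s. le m x" using wo unfolding wo_on_def by meson
  then obtain k where "\<forall>x\<in>range s. le (s k) x" by auto
  then have "le (s k) (s (Suc k))" by auto
  then show False using dec[of k] antisym by blast
qed

lemma wo_by_seq:
  assumes "\<And>s. (\<And>n. s n \<in> S) \<Longrightarrow> (\<And>n. lt (s (Suc n)) (s n)) \<Longrightarrow> False"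
  shows "wo_on le S"
  unfolding wo_on_def
proof (intro allI impI, rule ccontr)
  fix T assume T: "T \<subseteq> S" "T \<noteq> {}" and nm: "\<not> (\<exists>m\<in>T. \<forall>x\<in>T. le m x)"
  then have nx: "\<forall>m\<in>T. \<exists>x\<in>T. lt x m" using not_le by blast
  obtain t0 where t0: "t0 \<in> T" using T by auto
  define step where "step x = (SOME y. y \<in> T \<and> lt y x)" for x
  have step: "step x \<in> T \<and> lt (step x) x" if "x \<in> T" for x
    unfolding step_def by (rule someI_ex) (use nx that in blast)
  define s where "s = rec_nat t0 (\<lambda>_ x. step x)"
  have sS: "s (Suc n) = step (s n)" for n by (simp add: s_def)
  have sT: "s n \<in> T" for n
  proof (induction n)
    case 0 then show ?case using t0 by (simp add: s_def)
  next
    case (Suc n)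
    then show ?case using step sS by simp
  qed
  have "lt (s (Suc n)) (s n)" for n
    using step[OF sT[of n]] sS by simp
  then show False using assms[of s] sT T by blast
qed

lemma wo_subseq:
  fixes s :: "nat \<Rightarrow> 'a"
  assumes wo: "wo_on le S" and sS: "\<And>n. s n \<in> S"
  shows "\<exists>\<phi>. strict_mono \<phi> \<and> (\<forall>n. le (s (\<phi> n)) (s (\<phi> (Suc n))))"
proof -
  have ex: "\<exists>j\<ge>N. \<forall>n\<ge>N. le (s j) (s n)" for N
  proof -
    have "{s n | n. n \<ge> N} \<subseteq> S" "{s n | n. n \<ge> N} \<noteq> {}" using sS by auto
    then obtain m where "m \<in> {s n | n. n \<ge> N}" "\<forall>x\<in>{s n | n. n \<ge> N}. le m x"
      using wo unfolding wo_on_def by meson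
    then show ?thesis by auto
  qed
  define mi :: "nat \<Rightarrow> nat" where "mi N = (SOME j. j \<ge> N \<and> (\<forall>n\<ge>N. le (s j) (s n)))" for N
  have mi: "mi N \<ge> N" "\<forall>n\<ge>N. le (s (mi N)) (s n)" for N
    using someI_ex[OF ex[of N]] unfolding mi_def by blast+
  define \<phi> where "\<phi> = rec_nat (mi 0) (\<lambda>_ p. mi (Suc p))"
  have phS: "\<phi> (Suc n) = mi (Suc (\<phi> n))" for n by (simp add: \<phi>_def)
  have "strict_mono \<phi>" unfolding strict_mono_Suc_iff using mi(1) phS by (metis Suc_le_lessD)
  moreover have "\<forall>n'\<ge>\<phi> n. le (s (\<phi> n)) (s n')" for n
  proof (cases n)
    case 0 then show ?thesis using mi(2)[of 0] by (simp add: \<phi>_def)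
  next
    case (Suc m)
    then show ?thesis using mi[of "Suc (\<phi> m)"] phS[of m] by auto
  qed
  then have "le (s (\<phi> n)) (s (\<phi> (Suc n)))" for n
    using \<open>strict_mono \<phi>\<close> by (simp add: strict_mono_less_eq)
  ultimately show ?thesis by blast
qed

end



context toa begin

lemma wo_plus:
  assumes A: "wo_on le A" and B: "wo_on le B"
  shows "wo_on le {a + b | a b. a \<in> A \<and> b \<in> B}"
proof (rule wo_by_seq)
  fix s assume sS: "\<And>n. s n \<in> {a + b | a b. a \<in> A \<and> b \<in> B}" and dec: "\<And>n. lt (s (Suc n)) (s n)"
  have "\<forall>n. \<exists>p. fst p \<in> A \<and> snd p \<in> B \<and> s n = fst p + snd p" using sS by fastforce
  then obtain p where p: "\<And>n. fst (p n) \<in> A \<and> snd (p n) \<in> B \<and> s n = fst (p n) + snd (p n)" by metis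
  obtain \<phi> where \<phi>: "strict_mono \<phi>" "\<And>n. le (fst (p (\<phi> n))) (fst (p (\<phi> (Suc n))))"
    using wo_subseq[OF A, of "\<lambda>n. fst (p n)"] p by blast
  have "lt (snd (p (\<phi> (Suc n)))) (snd (p (\<phi> n)))" for n
  proof -
    have "lt (s (\<phi> (Suc n))) (s (\<phi> n))" using dec_chain[of s, OF dec] \<phi>(1) by (simp add: strict_mono_def)
    from lt_diff[OF this \<phi>(2)[of n]] show ?thesis using p[of "\<phi> n"] p[of "\<phi> (Suc n)"] by simp
  qed
  then show False using wo_no_dec[OF B, of "\<lambda>n. snd (p (\<phi> n))"] p by blast
qed

lemma lt_neg: "lt a b \<Longrightarrow> lt (- b) (- a)"
  using le_neg[of a b] by auto

lemma finite_rep: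
  assumes A: "wo_on le A" and B: "wo_on le B"
  shows "finite {a \<in> A. x - a \<in> B}"
proof (rule ccontr)
  assume "infinite {a \<in> A. x - a \<in> B}"
  then obtain f :: "nat \<Rightarrow> 'a" where f: "inj f" "range f \<subseteq> {a \<in> A. x - a \<in> B}"
    using infinite_countable_subset by blast
  obtain \<phi> where \<phi>: "strict_mono \<phi>" "\<And>n. le (f (\<phi> n)) (f (\<phi> (Suc n)))"
    using wo_subseq[OF A, of f] f by blast
  have "lt (x - f (\<phi> (Suc n))) (x - f (\<phi> n))" for n
  proof -
    have "f (\<phi> n) \<noteq> f (\<phi> (Suc n))"
      using f(1) \<phi>(1) by (metis inj_eq lessI less_irrefl strict_mono_def)
    then have "lt (f (\<phi> n)) (f (\<phi> (Suc n)))" using \<phi>(2) by blast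
    from lt_add_le[OF lt_neg[OF this] refl[of x]] show ?thesis
      by (simp add: algebra_simps)
  qed
  moreover have "x - f (\<phi> n) \<in> B" for n using f by auto
  ultimately show False using wo_no_dec[OF B, of "\<lambda>n. x - f (\<phi> n)"] by blast
qed

lemma mon_zero: "0 \<in> mon E"
  unfolding mon_def by (rule CollectI, rule exI[of _ "[]"]) simp

lemma mon_base: "e \<in> E \<Longrightarrow> e \<in> mon E"
  unfolding mon_def by (rule CollectI, rule exI[of _ "[e]"]) simp

lemma mon_add: "x \<in> mon E \<Longrightarrow> y \<in> mon E \<Longrightarrow> x + y \<in> mon E"
  unfolding mon_def
proof -
  assume "x \<in> {sum_list xs |xs. set xs \<subseteq> E}" "y \<in> {sum_list xs |xs. set xs \<subseteq> E}"
  then obtain xs ys where "set xs \<subseteq> E" "set ys \<subseteq> E" "x = sum_list xs" "y = sum_list ys" by auto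
  then show "x + y \<in> {sum_list xs |xs. set xs \<subseteq> E}"
    by (intro CollectI exI[of _ "xs @ ys"]) auto
qed

lemma mon_mono: "E \<subseteq> E' \<Longrightarrow> mon E \<subseteq> mon E'"
  unfolding mon_def by blast

lemma mon_sum: "finite I \<Longrightarrow> (\<And>i. i \<in> I \<Longrightarrow> f i \<in> mon E) \<Longrightarrow> sum f I \<in> mon E"
  by (induction I rule: finite_induct) (auto intro: mon_add mon_zero)

lemma mon_nonneg:
  assumes pos: "\<forall>e\<in>E. lt 0 e" shows "x \<in> mon E \<Longrightarrow> le 0 x"
proof -
  have "set xs \<subseteq> E \<Longrightarrow> le 0 (sum_list xs)" for xs
  proof (induction xs)
    case Nil then show ?case using refl by simp
  next
    case (Cons e xs)
    then have "le 0 e" "le 0 (sum_list xs)" using pos by auto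
    then show ?case using le_add[of 0 e 0 "sum_list xs"] by simp
  qed
  then show "x \<in> mon E \<Longrightarrow> le 0 x" unfolding mon_def by blast
qed

lemma neumann:
  assumes pos: "\<forall>e\<in>E. lt 0 e" and wo: "wo_on le E"
  shows "wo_on le (mon E)"
proof (rule wo_by_seq)
  fix s0 assume s0M: "\<And>n. s0 n \<in> mon E" and s0dec: "\<And>n. lt (s0 (Suc n)) (s0 n)"
  define B where "B = {x. \<exists>s. s 0 = x \<and> (\<forall>n. s n \<in> mon E) \<and> (\<forall>n. lt (s (Suc n)) (s n))}"
  have s0B: "s0 0 \<in> B" unfolding B_def using s0M s0dec by blast
  have BM: "x \<in> B \<Longrightarrow> x \<in> mon E" for x unfolding B_def by force
  have Bnext: "\<exists>y\<in>B. lt y x" if xB: "x \<in> B" for x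
  proof -
    obtain s where s: "s 0 = x" "\<forall>n. s n \<in> mon E" "\<forall>n. lt (s (Suc n)) (s n)" using xB unfolding B_def by blast
    have "s 1 \<in> B" unfolding B_def using s by (intro CollectI exI[of _ "\<lambda>n. s (Suc n)"]) auto
    then show ?thesis using s(1,3) by (metis One_nat_def)
  qed
  have Bnz: "x \<noteq> 0" if xB: "x \<in> B" for x
  proof
    assume "x = 0"
    obtain y where "y \<in> B" "lt y x" using Bnext xB by blast
    then show False using mon_nonneg[OF pos BM[of y]] antisym[of 0 y] \<open>x = 0\<close> by auto
  qed
  define len where "len x = (LEAST n. \<exists>xs. set xs \<subseteq> E \<and> length xs = n \<and> sum_list xs = x)" for x
  have decomp: "\<exists>e\<in>E. \<exists>y\<in>mon E. x = e + y \<and> len y < len x" if xh: "x \<in> mon E" "x \<noteq> 0" for x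
  proof -
    obtain xs where "set xs \<subseteq> E" "sum_list xs = x" using xh unfolding mon_def by blast
    then have "\<exists>ys. set ys \<subseteq> E \<and> length ys = length xs \<and> sum_list ys = x" by blast
    from LeastI[of "\<lambda>n. \<exists>ys. set ys \<subseteq> E \<and> length ys = n \<and> sum_list ys = x", OF this]
    obtain ys where ys: "set ys \<subseteq> E" "length ys = len x" "sum_list ys = x"
      unfolding len_def by blast
    then obtain e zs where ez: "ys = e # zs" using xh(2) by (cases ys) auto
    have "len (sum_list zs) \<le> length zs"
      unfolding len_def using ys ez by (intro Least_le) auto
    then show ?thesis using ys ez by (intro bexI[of _ e] bexI[of _ "sum_list zs"]) (auto simp: mon_def)
  qed
  then obtain ee rr where err: "\<And>x. x \<in> mon E \<Longrightarrow> x \<noteq> 0 \<Longrightarrow> ee x \<in> E \<and> rr x \<in> mon E \<and> x = ee x + rr x \<and> len (rr x) < len x"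
    by metis
  have ex0: "\<exists>y. y \<in> B \<and> (\<forall>z. z \<in> B \<longrightarrow> len y \<le> len z)"
    using ex_has_least_nat[of "\<lambda>y. y \<in> B" "s0 0" len] s0B by blast
  have exS: "\<exists>y. (y \<in> B \<and> lt y x) \<and> (\<forall>z. (z \<in> B \<and> lt z x) \<longrightarrow> len y \<le> len z)" if xB: "x \<in> B" for x
  proof -
    obtain y where "y \<in> B \<and> lt y x" using Bnext xB by blast
    then show ?thesis using ex_has_least_nat[of "\<lambda>y. y \<in> B \<and> lt y x" y len] by blast
  qed
  define t0 where "t0 = (SOME y. y \<in> B \<and> (\<forall>z. z \<in> B \<longrightarrow> len y \<le> len z))"
  define nxt where "nxt x = (SOME y. (y \<in> B \<and> lt y x) \<and> (\<forall>z. (z \<in> B \<and> lt z x) \<longrightarrow> len y \<le> len z))" for x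
  have t0: "t0 \<in> B" "\<And>z. z \<in> B \<Longrightarrow> len t0 \<le> len z"
    using someI_ex[OF ex0] unfolding t0_def by blast+
  have nxt: "nxt x \<in> B" "lt (nxt x) x" "\<And>z. z \<in> B \<Longrightarrow> lt z x \<Longrightarrow> len (nxt x) \<le> len z" if "x \<in> B" for x
    using someI_ex[OF exS[OF that]] unfolding nxt_def by blast+
  define t where "t = rec_nat t0 (\<lambda>_ x. nxt x)"
  have tS: "t (Suc n) = nxt (t n)" for n by (simp add: t_def)
  have t00: "t 0 = t0" by (simp add: t_def)
  have tB: "t n \<in> B" for n by (induction n) (use t0 nxt tS t00 in auto)
  have tdec: "lt (t (Suc n)) (t n)" for n using nxt(2)[OF tB[of n]] tS by simp
  have tmin: "len (t (Suc n)) \<le> len z" if "z \<in> B" "lt z (t n)" for n z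
    using nxt(3)[OF tB[of n] that] tS by simp
  define e where "e n = ee (t n)" for n
  define r where "r n = rr (t n)" for n
  have er: "e n \<in> E" "r n \<in> mon E" "t n = e n + r n" "len (r n) < len (t n)" for n
    using err[OF BM[OF tB[of n]] Bnz[OF tB[of n]]] unfolding e_def r_def by auto
  obtain \<phi> where \<phi>: "strict_mono \<phi>" "\<And>n. le (e (\<phi> n)) (e (\<phi> (Suc n)))"
    using wo_subseq[OF wo, of e] er(1) by blast
  have rdec: "lt (r (\<phi> (Suc n))) (r (\<phi> n))" for n
  proof -
    have "lt (t (\<phi> (Suc n))) (t (\<phi> n))" using dec_chain[of t, OF tdec] \<phi>(1) by (simp add: strict_mono_def)
    from lt_diff[OF this \<phi>(2)[of n]] show ?thesis using er(3)[of "\<phi> n"] er(3)[of "\<phi> (Suc n)"]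
      by (simp add: algebra_simps)
  qed
  define N where "N = \<phi> 0"
  have rB: "r N \<in> B" unfolding B_def N_def
    using rdec er(2) by (intro CollectI exI[of _ "\<lambda>n. r (\<phi> n)"]) auto
  have rlt: "lt (r N) (t N)"
  proof -
    have "lt (0 + r N) (e N + r N)" using lt_add_le[of 0 "e N" "r N" "r N"] pos er(1)[of N] refl by blast
    then show ?thesis using er(3)[of N] by simp
  qed
  show False
  proof (cases N)
    case 0
    then show ?thesis using t0(2)[OF rB] er(4)[of N] t00 by simp
  next
    case (Suc m)
    have "lt (r N) (t m)" using lt_trans[OF rlt] tdec[of m] Suc by simp
    then show ?thesis using tmin[OF rB, of m] er(4)[of N] Suc by simp
  qed
qed

end



definition hmon :: "'k::zero \<Rightarrow> 'a \<Rightarrow> 'a \<Rightarrow> 'k" where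
  "hmon c a = (\<lambda>x. if x = a then c else 0)"

lemma hone_hmon: "hone = hmon 1 (0::'a::zero)"
  unfolding hone_def hmon_def by auto

lemma hmul_nz: "hmul s u x \<noteq> 0 \<Longrightarrow> \<exists>b. s b \<noteq> 0 \<and> u (x - b) \<noteq> 0"
  unfolding hmul_def by (metis (mono_tags, lifting) empty_Collect_eq sum.empty)

lemma hmul_hmon_left:
  fixes c :: "'k::field"
  assumes "c \<noteq> 0" shows "hmul (hmon c a) u = (\<lambda>x. c * u (x - a))"
proof
  fix x
  have seq: "{b. hmon c a b \<noteq> 0 \<and> u (x - b) \<noteq> 0} = (if u (x - a) \<noteq> 0 then {a} else {})"
    using assms by (auto simp: hmon_def)
  show "hmul (hmon c a) u x = c * u (x - a)"
    unfolding hmul_def seq by (cases "u (x - a) = 0") (auto simp: hmon_def)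
qed

lemma hmul_hmon_right:
  fixes c :: "'k::field"
  assumes "c \<noteq> 0" shows "hmul u (hmon c a) = (\<lambda>x. u (x - a) * c)"
proof
  fix x
  have seq: "{b. u b \<noteq> 0 \<and> hmon c a (x - b) \<noteq> 0} = (if u (x - a) \<noteq> 0 then {x - a} else {})"
    using assms by (auto simp: hmon_def)
  show "hmul u (hmon c a) x = u (x - a) * c"
    unfolding hmul_def seq by (cases "u (x - a) = 0") (auto simp: hmon_def)
qed

lemma hmon_iter:
  fixes c :: "'k::field"
  assumes "c \<noteq> 0"
  shows "(hmul (hmon c a) ^^ m) hone = hmon (c ^ m) (((+) a ^^ m) 0)"
proof (induction m)
  case 0 then show ?case by (simp add: hone_hmon)
next
  case (Suc m)
  have "(hmul (hmon c a) ^^ Suc m) hone = hmul (hmon c a) ((hmul (hmon c a) ^^ m) hone)" by simp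
  also have "\<dots> = hmul (hmon c a) (hmon (c ^ m) (((+) a ^^ m) 0))" by (simp only: Suc)
  also have "\<dots> = hmon (c ^ Suc m) (((+) a ^^ Suc m) 0)"
    unfolding hmul_hmon_left[OF assms] by (auto simp: hmon_def fun_eq_iff algebra_simps)
  finally show ?case .
qed

lemma hprod_nz: "hprod S x \<noteq> 0 \<Longrightarrow> \<exists>\<alpha>. (\<Sum>i\<in>UNIV. \<alpha> i) = x \<and> (\<forall>i. S i (\<alpha> i) \<noteq> 0)"
  unfolding hprod_def by (metis (mono_tags, lifting) empty_Collect_eq sum.empty)

lemma hprod_hmon:
  fixes C :: "'n::finite \<Rightarrow> 'k::field"
  assumes "\<And>i. C i \<noteq> 0"
  shows "hprod (\<lambda>i. hmon (C i) (p i)) = hmon (\<Prod>i\<in>UNIV. C i) (\<Sum>i\<in>UNIV. p i)"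
proof
  fix x :: 'a
  have e: "(\<forall>i. hmon (C i) (p i) (\<alpha> i) \<noteq> 0) \<longleftrightarrow> \<alpha> = p" for \<alpha>
    using assms by (auto simp: hmon_def fun_eq_iff)
  have "{\<alpha>. (\<Sum>i\<in>UNIV. \<alpha> i) = x \<and> (\<forall>i. hmon (C i) (p i) (\<alpha> i) \<noteq> 0)} =
        (if (\<Sum>i\<in>UNIV. p i) = x then {p} else {})"
    unfolding e by auto
  then show "hprod (\<lambda>i. hmon (C i) (p i)) x = hmon (\<Prod>i\<in>UNIV. C i) (\<Sum>i\<in>UNIV. p i) x"
    unfolding hprod_def by (auto simp: hmon_def)
qed

lemma iter_plus_neg: "((+) (- a) ^^ m) (0::'a::ab_group_add) = - (((+) a ^^ m) 0)"
  by (induction m) (auto simp: algebra_simps)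

context toa begin

lemma ord_prop:
  assumes h: "hahn le s" and nz: "s \<noteq> (\<lambda>_. 0)"
  shows "s (ord le s) \<noteq> 0" "\<And>b. s b \<noteq> 0 \<Longrightarrow> le (ord le s) b"
proof -
  have "supp s \<noteq> {}" using nz by (auto simp: supp_def)
  then obtain m where m: "m \<in> supp s" "\<forall>x\<in>supp s. le m x"
    using h unfolding hahn_def wo_on_def by blast
  have ex: "s m \<noteq> 0 \<and> (\<forall>b. s b \<noteq> 0 \<longrightarrow> le m b)" using m by (auto simp: supp_def)
  have "ord le s = m" unfolding ord_def
  proof (rule the_equality)
    fix a assume "s a \<noteq> 0 \<and> (\<forall>b. s b \<noteq> 0 \<longrightarrow> le a b)"
    then show "a = m" using ex antisym by blast
  qed (rule ex)
  then show "s (ord le s) \<noteq> 0" "\<And>b. s b \<noteq> 0 \<Longrightarrow> le (ord le s) b" using ex by auto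
qed

lemma hmul_finite:
  assumes "hahn le s" "hahn le u"
  shows "finite {b. s b \<noteq> 0 \<and> u (x - b) \<noteq> 0}"
  using finite_rep[of "supp s" "supp u" x] assms by (simp add: hahn_def supp_def)

lemma hmul_on:
  assumes "finite U" "{b. s b \<noteq> 0 \<and> u (x - b) \<noteq> 0} \<subseteq> U"
  shows "hmul s u x = (\<Sum>b\<in>U. s b * u (x - b))"
  unfolding hmul_def using assms by (intro sum.mono_neutral_left) auto

lemma hahn_diff:
  fixes u v :: "'a \<Rightarrow> 'k::ab_group_add"
  assumes "hahn le u" "hahn le v" shows "hahn le (\<lambda>y. u y - v y)"
proof -
  have "supp (\<lambda>y. u y - v y) \<subseteq> supp u \<union> supp v" by (auto simp: supp_def)
  then show ?thesis using assms wo_Un wo_subset unfolding hahn_def by blast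
qed

lemma hmul_diff:
  fixes s :: "'a \<Rightarrow> 'k::field"
  assumes hs: "hahn le s" and hu: "hahn le u" and hv: "hahn le v"
  shows "hmul s (\<lambda>y. u y - v y) x = hmul s u x - hmul s v x"
proof -
  define U where "U = {b. s b \<noteq> 0 \<and> u (x - b) \<noteq> 0} \<union> {b. s b \<noteq> 0 \<and> v (x - b) \<noteq> 0}"
  have fU: "finite U" unfolding U_def using hmul_finite hs hu hv by blast
  have "hmul s (\<lambda>y. u y - v y) x = (\<Sum>b\<in>U. s b * (u (x - b) - v (x - b)))"
    by (rule hmul_on[OF fU]) (auto simp: U_def)
  also have "\<dots> = (\<Sum>b\<in>U. s b * u (x - b)) - (\<Sum>b\<in>U. s b * v (x - b))"
    by (simp add: algebra_simps sum_subtractf)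
  also have "(\<Sum>b\<in>U. s b * u (x - b)) = hmul s u x"
    by (rule hmul_on[symmetric, OF fU]) (auto simp: U_def)
  also have "(\<Sum>b\<in>U. s b * v (x - b)) = hmul s v x"
    by (rule hmul_on[symmetric, OF fU]) (auto simp: U_def)
  finally show ?thesis .
qed

lemma hmul_lead:
  fixes s :: "'a \<Rightarrow> 'k::field"
  assumes hs: "hahn le s" "s \<noteq> (\<lambda>_. 0)" and hw: "hahn le w" "w \<noteq> (\<lambda>_. 0)"
  shows "hmul s w (ord le s + ord le w) \<noteq> 0"
proof -
  let ?a = "ord le s" and ?m = "ord le w"
  have "{b. s b \<noteq> 0 \<and> w (?a + ?m - b) \<noteq> 0} = {?a}"
  proof (intro equalityI subsetI)
    fix b assume "b \<in> {b. s b \<noteq> 0 \<and> w (?a + ?m - b) \<noteq> 0}"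
    then have 1: "le ?a b" and 2: "le ?m (?a + ?m - b)" using ord_prop[OF hs] ord_prop[OF hw] by auto
    from add_right[OF 2, of "b - ?m"] have "le b ?a" by (simp add: algebra_simps)
    then show "b \<in> {?a}" using 1 antisym by auto
  qed (use ord_prop[OF hs] ord_prop[OF hw] in auto)
  then show ?thesis unfolding hmul_def using ord_prop[OF hs] ord_prop[OF hw] by simp
qed

lemma inv_unique:
  fixes s :: "'a \<Rightarrow> 'k::field"
  assumes hs: "hahn le s" "s \<noteq> (\<lambda>_. 0)" and h1: "hahn le u1" "hmul s u1 = hone"
    and h2: "hahn le u2" "hmul s u2 = hone"
  shows "u1 = u2"
proof (rule ccontr)
  assume ne: "u1 \<noteq> u2"
  define w where "w = (\<lambda>y. u1 y - u2 y)"
  have hw: "hahn le w" unfolding w_def using hahn_diff h1 h2 by blast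
  have nz: "w \<noteq> (\<lambda>_. 0)" using ne unfolding w_def by (auto simp: fun_eq_iff)
  have "hmul s w x = 0" for x unfolding w_def using hmul_diff[OF hs(1) h1(1) h2(1)] h1 h2 by simp
  then show False using hmul_lead[OF hs hw nz] by blast
qed

lemma inv_exists:
  fixes s :: "'a \<Rightarrow> 'k::field"
  assumes hs: "hahn le s" and nz: "s \<noteq> (\<lambda>_. 0)"
  defines "a \<equiv> ord le s"
  defines "E \<equiv> (\<lambda>b. b - a) ` supp s - {0}"
  shows "\<exists>u. hahn le u \<and> hmul s u = hone \<and> (\<forall>z. u z \<noteq> 0 \<longrightarrow> z + a \<in> mon E)"
proof -
  define c where "c = s a"
  have c: "c \<noteq> 0" using ord_prop[OF hs nz] by (simp add: c_def a_def)
  have amin: "s b \<noteq> 0 \<Longrightarrow> le a b" for b using ord_prop[OF hs nz] by (simp add: a_def)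
  have pos: "\<forall>e\<in>E. lt 0 e"
  proof
    fix e assume "e \<in> E"
    then obtain b where b: "s b \<noteq> 0" "e = b - a" "e \<noteq> 0" unfolding E_def supp_def by auto
    have "le (a - a) (b - a)" using amin[OF b(1)] add_right[of a b "-a"] by simp
    then show "lt 0 e" using b by simp
  qed
  have woE: "wo_on le E"
  proof -
    have "wo_on le ((\<lambda>x. x + (- a)) ` supp s)" using hs wo_translate unfolding hahn_def by blast
    then show ?thesis unfolding E_def by (rule wo_subset) auto
  qed
  define M where "M = mon E"
  have woM: "wo_on le M" unfolding M_def using neumann[OF pos woE] .
  have E0: "\<And>b. s b \<noteq> 0 \<Longrightarrow> b - a \<in> M"
    unfolding M_def E_def by (metis (mono_tags, lifting) DiffI mem_Collect_eq image_eqI mon_base mon_zero singletonD supp_def)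
  define R where "R = {(y, x). y \<in> M \<and> x \<in> M \<and> lt y x}"
  have wfR: "wf R"
  proof (rule wfI_min)
    fix x :: 'a and Q assume xQ: "x \<in> Q"
    show "\<exists>z\<in>Q. \<forall>y. (y, z) \<in> R \<longrightarrow> y \<notin> Q"
    proof (cases "Q \<inter> M = {}")
      case True
      then show ?thesis using xQ unfolding R_def by auto
    next
      case False
      then obtain m where m: "m \<in> Q \<inter> M" "\<forall>y\<in>Q \<inter> M. le m y"
        using woM unfolding wo_on_def by (meson inf_le2)
      show ?thesis
      proof (intro bexI[of _ m] allI impI)
        fix y assume "(y, m) \<in> R"
        then show "y \<notin> Q" using m antisym unfolding R_def by blast
      qed (use m in auto)
    qed
  qed
  define D where "D m = {e \<in> E. m - e \<in> M}" for m
  have fD: "finite (D m)" for m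
    unfolding D_def using finite_rep[OF woE woM, of m] unfolding M_def by simp
  define H where "H v m = (if m \<in> M then (hone m - (\<Sum>e\<in>D m. s (a + e) * v (m - e))) / c else 0)"
    for v :: "'a \<Rightarrow> 'k" and m
  define v where "v = wfrec R H"
  have veq: "v m = H v m" for m
  proof -
    have "v m = H (cut v R m) m" unfolding v_def by (rule wfrec[OF wfR])
    also have "\<dots> = H v m"
    proof (cases "m \<in> M")
      case True
      have "(m - e, m) \<in> R" if "e \<in> D m" for e
      proof -
        have "lt 0 e" using pos that unfolding D_def by auto
        from lt_add_le[OF lt_neg[OF this] refl[of m]] have "lt (m - e) (m - 0)" by simp
        then show ?thesis using that True unfolding R_def D_def by auto
      qed
      then show ?thesis unfolding H_def by (auto intro!: sum.cong simp: cut_apply)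
    qed (simp add: H_def)
    finally show ?thesis .
  qed
  have voff: "m \<notin> M \<Longrightarrow> v m = 0" for m using veq[of m] by (simp add: H_def)
  define u where "u z = v (z + a)" for z
  have usupp: "u z \<noteq> 0 \<Longrightarrow> z + a \<in> M" for z using voff unfolding u_def by blast
  have hu: "hahn le u"
  proof -
    have "supp u \<subseteq> (\<lambda>x. x + (- a)) ` M" using usupp unfolding supp_def
      by (auto intro!: image_eqI[where x = "_ + a"])
    then show ?thesis unfolding hahn_def using wo_translate[OF woM] wo_subset by blast
  qed
  have "hmul s u x = hone x" for x
  proof -
    define Se where "Se = {e. s (a + e) \<noteq> 0 \<and> v (x - e) \<noteq> 0}"
    have img: "{b. s b \<noteq> 0 \<and> u (x - b) \<noteq> 0} = (\<lambda>e. a + e) ` Se"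
    proof (intro equalityI subsetI)
      fix b assume "b \<in> {b. s b \<noteq> 0 \<and> u (x - b) \<noteq> 0}"
      then show "b \<in> (\<lambda>e. a + e) ` Se" unfolding Se_def u_def
        by (intro image_eqI[of _ _ "b - a"]) (auto simp: algebra_simps)
    qed (auto simp: Se_def u_def algebra_simps)
    have "hmul s u x = (\<Sum>e\<in>Se. s (a + e) * v (x - e))"
      unfolding hmul_def img by (subst sum.reindex) (auto simp: inj_on_def u_def algebra_simps)
    also have "\<dots> = hone x"
    proof (cases "x \<in> M")
      case True
      have 0: "0 \<notin> D x" unfolding D_def E_def by auto
      have sub: "Se \<subseteq> insert 0 (D x)"
      proof
        fix e assume "e \<in> Se"
        then have "s (a + e) \<noteq> 0" "x - e \<in> M" using voff unfolding Se_def by auto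
        then show "e \<in> insert 0 (D x)" unfolding D_def E_def supp_def
          by (auto intro!: image_eqI[of _ _ "a + e"])
      qed
      have "(\<Sum>e\<in>Se. s (a + e) * v (x - e)) = (\<Sum>e\<in>insert 0 (D x). s (a + e) * v (x - e))"
        using sub fD unfolding Se_def by (intro sum.mono_neutral_left) auto
      also have "\<dots> = c * v x + (\<Sum>e\<in>D x. s (a + e) * v (x - e))"
        using 0 fD by (simp add: c_def)
      also have "\<dots> = hone x" using veq[of x] True c by (simp add: H_def)
      finally show ?thesis .
    next
      case False
      have "Se = {}"
      proof (rule ccontr)
        assume "Se \<noteq> {}"
        then obtain e where "s (a + e) \<noteq> 0" "v (x - e) \<noteq> 0" unfolding Se_def by auto
        then have "e \<in> M" "x - e \<in> M" using E0[of "a + e"] voff by auto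
        then have "x \<in> M" using mon_add[of e E "x - e"] unfolding M_def by simp
        then show False using False by simp
      qed
      moreover have "x \<noteq> 0" using False mon_zero unfolding M_def by auto
      ultimately show ?thesis by (simp add: hone_def)
    qed
    finally show ?thesis .
  qed
  then show ?thesis using hu usupp unfolding M_def by (intro exI[of _ u]) auto
qed

lemma hinv_prop:
  fixes s :: "'a \<Rightarrow> 'k::field"
  assumes hs: "hahn le s" and nz: "s \<noteq> (\<lambda>_. 0)"
  shows "hahn le (hinv le s)" "hmul s (hinv le s) = hone"
    "\<And>z. hinv le s z \<noteq> 0 \<Longrightarrow> z + ord le s \<in> mon ((\<lambda>b. b - ord le s) ` supp s - {0})"
proof -
  obtain u where u: "hahn le u" "hmul s u = hone"
    "\<forall>z. u z \<noteq> 0 \<longrightarrow> z + ord le s \<in> mon ((\<lambda>b. b - ord le s) ` supp s - {0})"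
    using inv_exists[OF hs nz] by blast
  have "hinv le s = u" unfolding hinv_def
    by (rule the_equality) (use u inv_unique[OF hs nz] in auto)
  then show "hahn le (hinv le s)" "hmul s (hinv le s) = hone"
    "\<And>z. hinv le s z \<noteq> 0 \<Longrightarrow> z + ord le s \<in> mon ((\<lambda>b. b - ord le s) ` supp s - {0})"
    using u by auto
qed

end



lemma toa_from: "toa_order le \<Longrightarrow> toa le"
  unfolding toa_order_def by unfold_locales blast+

lemma iter_fst: "fst (((+) p ^^ m) 0) = ((+) (fst p) ^^ m) 0"
  by (induction m) auto

lemma iter_snd: "snd (((+) p ^^ m) 0) = ((+) (snd p) ^^ m) 0"
  by (induction m) auto

lemma zsmult_fst: "fst (zsmult k p) = zsmult k (fst p)"
  unfolding zsmult_def by (auto simp: iter_fst)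

lemma zsmult_snd: "snd (zsmult k p) = zsmult k (snd p)"
  unfolding zsmult_def by (auto simp: iter_snd)

lemma iter_vec: "((+) (b::int^'n) ^^ m) 0 = of_nat m *s b"
  by (induction m) (auto simp: vec_eq_iff algebra_simps)

lemma zsmult_vec: "zsmult k (b::int^'n) = k *s b"
  unfolding zsmult_def iter_vec by (auto simp: vec_eq_iff)

lemma int_indep:
  fixes B :: "int^'n::finite^'n" and c :: "int^'n"
  assumes dB: "det B \<noteq> 0" and sc: "(\<Sum>i\<in>UNIV. c$i *s B$i) = 0"
  shows "c = 0"
proof -
  define B' :: "real^'n^'n" where "B' = (\<chi> i j. real_of_int (B$i$j))"
  have dB': "det B' = real_of_int (det B)"
    unfolding B'_def det_def by (simp add: of_int_sum of_int_mult of_int_prod)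
  define x :: "real^'n" where "x = (\<chi> i. real_of_int (c$i))"
  have row0: "(\<Sum>i\<in>UNIV. x$i *s row i B') = 0"
  proof -
    have "(\<Sum>i\<in>UNIV. c$i * B$i$j) = 0" for j
      using arg_cong[OF sc, of "\<lambda>v. v$j"] by simp
    then have "real_of_int (\<Sum>i\<in>UNIV. c$i * B$i$j) = 0" for j by simp
    then have "(\<Sum>i\<in>UNIV. real_of_int (c$i) * real_of_int (B$i$j)) = 0" for j
      by (simp add: of_int_sum)
    then show ?thesis unfolding x_def B'_def row_def by (simp add: vec_eq_iff)
  qed
  have "c$k = 0" for k
  proof -
    have "det ((\<chi> i. if i = k then (\<Sum>i\<in>UNIV. x$i *s row i B') else row i B')::real^'n^'n) = x$k * det B'"
      by (rule cramer_lemma_transpose)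
    moreover have "det ((\<chi> i. if i = k then (\<Sum>i\<in>UNIV. x$i *s row i B') else row i B')::real^'n^'n) = 0"
    proof (rule det_zero_row(2)[of k])
      have r: "row k ((\<chi> i. if i = k then V else row i B')::real^'n^'n) = V" for V :: "real^'n"
        by (simp add: row_def vec_eq_iff)
      show "row k ((\<chi> i. if i = k then (\<Sum>i\<in>UNIV. x$i *s row i B') else row i B')::real^'n^'n) = 0"
        by (simp only: r row0)
    qed
    ultimately have "x$k * det B' = 0" by simp
    then show ?thesis using dB dB' unfolding x_def by simp
  qed
  then show ?thesis by (simp add: vec_eq_iff)
qed

lemma fmap_inj:
  fixes le :: "'g::ab_group_add \<times> (int ^ 'n::finite) \<Rightarrow> 'g \<times> (int ^ 'n) \<Rightarrow> bool"
    and F :: "'n \<Rightarrow> 'g \<times> (int ^ 'n) \<Rightarrow> 'k::zero"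
  assumes dB: "det (\<chi> i j. snd (ord le (F i)) $ j) \<noteq> 0"
  shows "inj (fmap le F)"
proof (rule injI)
  fix p q assume eq: "fmap le F p = fmap le F q"
  obtain g k g' k' where pq: "p = (g, k)" "q = (g', k')" by (cases p, cases q)
  define a where "a i = ord le (F i)" for i
  have fm: "fmap le F (g, k) = (g, 0) + (\<Sum>i\<in>UNIV. zsmult (k $ i) (a i))" for g k
    unfolding fmap_def a_def by simp
  have "snd (fmap le F (g, k)) = snd (fmap le F (g', k'))" using eq pq by simp
  then have "(\<Sum>i\<in>UNIV. k$i *s snd (a i)) = (\<Sum>i\<in>UNIV. k'$i *s snd (a i))"
    unfolding fm by (simp add: snd_sum zsmult_snd zsmult_vec)
  then have "(\<Sum>i\<in>UNIV. (k - k')$i *s (\<chi> i j. snd (a i) $ j)$i) = 0"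
    by (simp add: vector_sub_rdistrib sum_subtractf)
  from int_indep[OF _ this] dB have kk: "k = k'" unfolding a_def by simp
  have "fst (fmap le F (g, k)) = fst (fmap le F (g', k'))" using eq pq by simp
  then have "g = g'" unfolding fm kk by (simp add: fst_sum)
  then show "p = q" using pq kk by simp
qed

context toa begin

lemma ord_eqI: "s m \<noteq> 0 \<Longrightarrow> (\<And>b. s b \<noteq> 0 \<Longrightarrow> le m b) \<Longrightarrow> ord le s = m"
  unfolding ord_def by (rule the_equality) (auto intro: antisym)

lemma hahn_hmon: "hahn le (hmon c p)"
  unfolding hahn_def by (rule wo_subset[OF wo_single[of p]]) (auto simp: supp_def hmon_def)

lemma init_hmon: "init_term le s = hmon (s (ord le s)) (ord le s)"
  unfolding init_term_def hmon_def by auto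

lemma init_props:
  assumes "hahn le s" "s \<noteq> (\<lambda>_. 0)"
  shows "hahn le (init_term le s)" "init_term le s \<noteq> (\<lambda>_. 0)" "ord le (init_term le s) = ord le s"
proof -
  show "hahn le (init_term le s)" unfolding init_hmon by (rule hahn_hmon)
  show "init_term le s \<noteq> (\<lambda>_. 0)" using ord_prop[OF assms] unfolding init_term_def
    by (metis (full_types))
  show "ord le (init_term le s) = ord le s"
    by (rule ord_eqI) (use ord_prop[OF assms] in \<open>auto simp: init_term_def refl split: if_splits\<close>)
qed

lemma hinv_hmon:
  fixes c :: "'k::field"
  assumes c: "c \<noteq> 0"
  shows "hinv le (hmon c p) = hmon (inverse c) (- p)"
  unfolding hinv_def
proof (rule the_equality)
  show "hahn le (hmon (inverse c) (- p)) \<and> hmul (hmon c p) (hmon (inverse c) (- p)) = hone"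
  proof
    show "hahn le (hmon (inverse c) (- p))" by (rule hahn_hmon)
    show "hmul (hmon c p) (hmon (inverse c) (- p)) = hone"
      unfolding hmul_hmon_left[OF c] using c by (auto simp: hmon_def hone_def fun_eq_iff)
  qed
next
  fix u assume "hahn le u \<and> hmul (hmon c p) u = hone"
  then have "c * u (x - p) = hone x" for x unfolding hmul_hmon_left[OF c] by metis
  from this[of "y + p" for y] have "c * u y = hone (y + p)" for y by simp
  then have "u y = hone (y + p) / c" for y using c by (metis nonzero_mult_div_cancel_left)
  then show "u = hmon (inverse c) (- p)"
    using c by (auto simp: fun_eq_iff hmon_def hone_def eq_neg_iff_add_eq_0 divide_inverse)
qed

lemma hpow_hmon:
  fixes c :: "'k::field"
  assumes c: "c \<noteq> 0"
  shows "hpow le (hmon c p) k = hmon (if 0 \<le> k then c ^ nat k else inverse c ^ nat (- k)) (zsmult k p)"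
  unfolding hpow_def zsmult_def
  using c by (auto simp: hmon_iter hinv_hmon iter_plus_neg)

end

lemma xinit:
  fixes le :: "'g::ab_group_add \<times> (int ^ 'n::finite) \<Rightarrow> 'g \<times> (int ^ 'n) \<Rightarrow> bool"
    and s :: "'g \<times> (int ^ 'n) \<Rightarrow> 'k::zero"
  assumes toa: "toa le" and h: "hahn le s" and nz: "s \<noteq> (\<lambda>_. 0)"
  shows "xinit_exp le s = snd (ord le s)"
proof -
  interpret toa le by (rule toa)
  define om where "om = ord le s"
  have xt: "xterm s k z \<noteq> 0 \<longleftrightarrow> snd z = k \<and> s z \<noteq> 0" for k z
    unfolding xterm_def by (cases z) auto
  have hx: "hahn le (xterm s k)" for k
  proof -
    have "supp (xterm s k) \<subseteq> supp s" using xt by (auto simp: supp_def)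
    then show ?thesis using h wo_subset unfolding hahn_def by blast
  qed
  have omin: "s b \<noteq> 0 \<Longrightarrow> le om b" for b using ord_prop(2)[OF h nz] om_def by simp
  have oms: "s om \<noteq> 0" using ord_prop(1)[OF h nz] om_def by simp
  have ok: "le om (ord le (xterm s k)) \<and> snd (ord le (xterm s k)) = k" if "xterm s k \<noteq> (\<lambda>_. 0)" for k
    using ord_prop(1)[OF hx that] xt omin by blast
  have o0: "ord le (xterm s (snd om)) = om"
    by (rule ord_eqI) (use xt oms omin in auto)
  have nz0: "xterm s (snd om) \<noteq> (\<lambda>_. 0)"
    using xt oms by (metis)
  show ?thesis unfolding xinit_exp_def om_def[symmetric]
  proof (rule the_equality)
    show "xterm s (snd om) \<noteq> (\<lambda>_. 0) \<and> (\<forall>k'. xterm s k' \<noteq> (\<lambda>_. 0) \<longrightarrow>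
        le (ord le (xterm s (snd om))) (ord le (xterm s k')))"
      using nz0 o0 ok by auto
  next
    fix k assume k: "xterm s k \<noteq> (\<lambda>_. 0) \<and> (\<forall>k'. xterm s k' \<noteq> (\<lambda>_. 0) \<longrightarrow>
        le (ord le (xterm s k)) (ord le (xterm s k')))"
    then have "le (ord le (xterm s k)) om" using nz0 o0 by metis
    moreover have "le om (ord le (xterm s k))" "snd (ord le (xterm s k)) = k" using ok k by auto
    ultimately show "k = snd om" using antisym by metis
  qed
qed




lemma iter_supp:
  fixes s :: "'a::ab_group_add \<Rightarrow> 'k::field"
  assumes sp: "\<And>z. s z \<noteq> 0 \<Longrightarrow> z - p \<in> M" and M0: "0 \<in> M"
    and Madd: "\<And>x y. x \<in> M \<Longrightarrow> y \<in> M \<Longrightarrow> x + y \<in> M"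
  shows "(hmul s ^^ m) hone z \<noteq> 0 \<Longrightarrow> z - ((+) p ^^ m) 0 \<in> M"
proof (induction m arbitrary: z)
  case 0
  then show ?case using M0 by (simp add: hone_def split: if_splits)
next
  case (Suc m)
  then have "hmul s ((hmul s ^^ m) hone) z \<noteq> 0" by simp
  then obtain b where b: "s b \<noteq> 0" "(hmul s ^^ m) hone (z - b) \<noteq> 0" using hmul_nz by blast
  have "(b - p) + (z - b - ((+) p ^^ m) 0) \<in> M" using Madd sp[OF b(1)] Suc.IH[OF b(2)] by blast
  moreover have "((+) p ^^ Suc m) 0 = p + ((+) p ^^ m) 0" by (simp only: funpow.simps comp_apply)
  moreover have "z - (p + q) = (b - p) + (z - b - q)" for q by (simp add: algebra_simps)
  ultimately show ?case by metis
qed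

lemma P2:
  fixes le :: "'g::ab_group_add \<times> (int ^ 'n::finite) \<Rightarrow> 'g \<times> (int ^ 'n) \<Rightarrow> bool"
    and F S :: "'n \<Rightarrow> 'g \<times> (int ^ 'n) \<Rightarrow> 'k::field"
    and \<phi> :: "int ^ 'n \<Rightarrow> 'g \<Rightarrow> 'k"
  assumes toa: "toa le" and hS: "\<And>i. hahn le (S i)" and nzS: "\<And>i. S i \<noteq> (\<lambda>_. 0)"
    and ordS: "\<And>i. ord le (S i) = ord le (F i)" and injf: "inj (fmap le F)"
    and W: "wo_on le (fmap le F ` {(g, k). \<phi> k g \<noteq> 0})"
  shows "strictly_converges le (subst_term le \<phi> S)"
proof -
  interpret toa le by (rule toa)
  define a where "a i = ord le (F i)" for i
  define E where "E = (\<Union>i. (\<lambda>b. b - a i) ` supp (S i) - {0})"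
  define M where "M = mon E"
  have pos: "\<forall>e\<in>E. lt 0 e"
  proof
    fix e assume "e \<in> E"
    then obtain i b where b: "S i b \<noteq> 0" "e = b - a i" "e \<noteq> 0" unfolding E_def supp_def by auto
    have "le (a i) b" using ord_prop(2)[OF hS nzS b(1)] ordS a_def by simp
    then have "le (a i - a i) (b - a i)" using add_right[of "a i" b "- a i"] by simp
    then show "lt 0 e" using b by simp
  qed
  have woE: "wo_on le E"
  proof -
    have "wo_on le (\<Union>i\<in>UNIV. (\<lambda>x. x + (- a i)) ` supp (S i))"
    proof (rule wo_finite_UN)
      fix i
      show "wo_on le ((\<lambda>x. x + (- a i)) ` supp (S i))"
        using wo_translate[of "supp (S i)" "- a i"] hS[of i] by (simp only: hahn_def)
    qed simp
    then show ?thesis unfolding E_def by (rule wo_subset) auto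
  qed
  have woM: "wo_on le M" unfolding M_def using neumann[OF pos woE] .
  have M0: "0 \<in> M" unfolding M_def by (rule mon_zero)
  have Madd: "\<And>x y. x \<in> M \<Longrightarrow> y \<in> M \<Longrightarrow> x + y \<in> M" unfolding M_def by (rule mon_add)
  have suppS: "z - a i \<in> M" if "S i z \<noteq> 0" for i z
  proof (cases "z - a i = 0")
    case True then show ?thesis using M0 by simp
  next
    case False
    then have "z - a i \<in> E" unfolding E_def supp_def using that by blast
    then show ?thesis unfolding M_def by (rule mon_base)
  qed
  have suppI: "z - (- a i) \<in> M" if "hinv le (S i) z \<noteq> 0" for i z
  proof -
    have "z + a i \<in> mon ((\<lambda>b. b - a i) ` supp (S i) - {0})"
      using hinv_prop(3)[OF hS nzS that] ordS a_def by simp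
    moreover have "mon ((\<lambda>b. b - a i) ` supp (S i) - {0}) \<subseteq> M"
      unfolding M_def E_def by (rule mon_mono) blast
    ultimately show ?thesis by auto
  qed
  have supp_pow: "z - zsmult k (a i) \<in> M" if "hpow le (S i) k z \<noteq> 0" for i k z
  proof (cases "0 \<le> k")
    case True
    then have "(hmul (S i) ^^ nat k) hone z \<noteq> 0" using that by (simp add: hpow_def)
    from iter_supp[OF suppS M0 Madd this] show ?thesis using True by (simp add: zsmult_def)
  next
    case False
    then have "(hmul (hinv le (S i)) ^^ nat (- k)) hone z \<noteq> 0" using that by (simp add: hpow_def)
    from iter_supp[OF suppI M0 Madd this] show ?thesis using False
      by (simp add: zsmult_def iter_plus_neg)
  qed
  define P where "P k = (\<Sum>i\<in>UNIV. zsmult (k $ i) (a i))" for k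
  have supp_prod: "z - P k \<in> M" if hz: "hprod (\<lambda>i. hpow le (S i) (k $ i)) z \<noteq> 0" for k z
  proof -
    obtain \<alpha> where \<alpha>: "(\<Sum>i\<in>UNIV. \<alpha> i) = z" "\<And>i. hpow le (S i) (k $ i) (\<alpha> i) \<noteq> 0"
      using hprod_nz[OF hz] by blast
    have "(\<Sum>i\<in>UNIV. \<alpha> i - zsmult (k $ i) (a i)) \<in> M"
      unfolding M_def by (rule mon_sum) (use supp_pow[OF \<alpha>(2)] M_def in auto)
    then show ?thesis using \<alpha>(1) unfolding P_def by (simp add: sum_subtractf)
  qed
  have fm: "fmap le F (g, k) = (g, 0) + P k" for g k
    unfolding fmap_def a_def P_def by simp
  define T where "T = subst_term le \<phi> S"
  have supp_term: "\<exists>g. \<phi> k g \<noteq> 0 \<and> z - fmap le F (g, k) \<in> M" if hz: "T k z \<noteq> 0" for k z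
  proof -
    obtain b where b: "embG (\<phi> k) b \<noteq> 0" "hprod (\<lambda>i. hpow le (S i) (k $ i)) (z - b) \<noteq> 0"
      using hmul_nz hz unfolding T_def subst_term_def by blast
    obtain g k' where gk: "b = (g, k')" by (cases b)
    have "k' = 0" "\<phi> k g \<noteq> 0" using b(1) gk by (auto simp: embG_def split: if_splits)
    moreover have "z - b - P k \<in> M" using supp_prod[OF b(2)] .
    ultimately show ?thesis using gk fm by (intro exI[of _ g]) (simp add: algebra_simps)
  qed
  define Wset where "Wset = fmap le F ` {(g, k). \<phi> k g \<noteq> 0}"
  have fin: "finite {k. T k z \<noteq> 0}" for z
  proof -
    have "finite {w \<in> Wset. z - w \<in> M}" using finite_rep[OF W woM] unfolding Wset_def .
    then have "finite ((\<lambda>w. snd (the_inv (fmap le F) w)) ` {w \<in> Wset. z - w \<in> M})" by simp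
    moreover have "{k. T k z \<noteq> 0} \<subseteq> (\<lambda>w. snd (the_inv (fmap le F) w)) ` {w \<in> Wset. z - w \<in> M}"
    proof
      fix k assume "k \<in> {k. T k z \<noteq> 0}"
      then obtain g where g: "\<phi> k g \<noteq> 0" "z - fmap le F (g, k) \<in> M" using supp_term by blast
      then show "k \<in> (\<lambda>w. snd (the_inv (fmap le F) w)) ` {w \<in> Wset. z - w \<in> M}"
        unfolding Wset_def by (intro image_eqI[of _ _ "fmap le F (g, k)"]) (auto simp: the_inv_f_f[OF injf])
    qed
    ultimately show ?thesis by (rule finite_subset[rotated])
  qed
  have "supp (series_sum T) \<subseteq> {w + m | w m. w \<in> Wset \<and> m \<in> M}"
  proof
    fix z assume "z \<in> supp (series_sum T)"
    then have "series_sum T z \<noteq> 0" by (simp add: supp_def)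
    then obtain k where "T k z \<noteq> 0" unfolding series_sum_def
      by (metis (mono_tags, lifting) empty_Collect_eq sum.empty)
    then obtain g where g: "\<phi> k g \<noteq> 0" "z - fmap le F (g, k) \<in> M" using supp_term by blast
    then show "z \<in> {w + m | w m. w \<in> Wset \<and> m \<in> M}" unfolding Wset_def
      by (intro CollectI exI[of _ "fmap le F (g, k)"] exI[of _ "z - fmap le F (g, k)"]) auto
  qed
  then have "hahn le (series_sum T)"
    unfolding hahn_def using wo_plus[OF W[folded Wset_def] woM] wo_subset by blast
  then show ?thesis using fin unfolding strictly_converges_def T_def by blast
qed

lemma P1b:
  fixes le :: "'g::ab_group_add \<times> (int ^ 'n::finite) \<Rightarrow> 'g \<times> (int ^ 'n) \<Rightarrow> bool"
    and F :: "'n \<Rightarrow> 'g \<times> (int ^ 'n) \<Rightarrow> 'k::field"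
    and \<phi> :: "int ^ 'n \<Rightarrow> 'g \<Rightarrow> 'k"
  assumes toa: "toa le" and hF: "\<And>i. hahn le (F i)" and nzF: "\<And>i. F i \<noteq> (\<lambda>_. 0)"
    and injf: "inj (fmap le F)"
    and SC: "strictly_converges le (subst_term le \<phi> (\<lambda>i. init_term le (F i)))"
  shows "wo_on le (fmap le F ` {(g, k). \<phi> k g \<noteq> 0})"
proof -
  interpret toa le by (rule toa)
  define a where "a i = ord le (F i)" for i
  define c where "c i = F i (a i)" for i
  have c: "c i \<noteq> 0" for i using ord_prop(1)[OF hF nzF] unfolding c_def a_def by blast
  define P where "P k = (\<Sum>i\<in>UNIV. zsmult (k $ i) (a i))" for k
  have fm: "fmap le F (g, k) = (g, 0) + P k" for g k
    unfolding fmap_def a_def P_def by simp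
  define Cf where "Cf k = (\<Prod>i\<in>UNIV. (if 0 \<le> k $ i then c i ^ nat (k $ i) else inverse (c i) ^ nat (- (k $ i))))" for k
  have Cf: "Cf k \<noteq> 0" for k unfolding Cf_def using c by (simp add: prod_zero_iff)
  define T where "T = subst_term le \<phi> (\<lambda>i. init_term le (F i))"
  have Tk: "T k = (\<lambda>z. embG (\<phi> k) (z - P k) * Cf k)" for k
  proof -
    have "hprod (\<lambda>i. hpow le (init_term le (F i)) (k $ i)) = hmon (Cf k) (P k)"
      unfolding init_hmon a_def[symmetric] c_def[symmetric] hpow_hmon[OF c] Cf_def P_def
      by (rule hprod_hmon) (use c in simp)
    then show ?thesis unfolding T_def subst_term_def using hmul_hmon_right[OF Cf] by simp
  qed
  have "fmap le F ` {(g, k). \<phi> k g \<noteq> 0} \<subseteq> supp (series_sum T)"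
  proof
    fix z assume "z \<in> fmap le F ` {(g, k). \<phi> k g \<noteq> 0}"
    then obtain g k where gk: "\<phi> k g \<noteq> 0" "z = fmap le F (g, k)" by auto
    have "{k'. T k' z \<noteq> 0} = {k}"
    proof (intro equalityI subsetI)
      fix k' assume "k' \<in> {k'. T k' z \<noteq> 0}"
      then have e: "embG (\<phi> k') (z - P k') \<noteq> 0" using Tk by simp
      obtain g' k'' where gk': "z - P k' = (g', k'')" by (cases "z - P k'")
      have "k'' = 0" "\<phi> k' g' \<noteq> 0" using e gk' by (auto simp: embG_def split: if_splits)
      then have "z = fmap le F (g', k')" using gk' fm by (simp add: algebra_simps)
      then have "(g', k') = (g, k)" using gk injf by (simp add: inj_eq)
      then show "k' \<in> {k}" by simp
    qed (use gk fm Tk Cf in \<open>auto simp: embG_def\<close>)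
    then have "series_sum T z = T k z" unfolding series_sum_def by simp
    also have "\<dots> \<noteq> 0" using gk fm Tk Cf by (simp add: embG_def)
    finally show "z \<in> supp (series_sum T)" by (simp add: supp_def)
  qed
  then show ?thesis using SC wo_subset unfolding strictly_converges_def hahn_def T_def by blast
qed

theorem mainTheorem5:
  fixes le :: "'g::ab_group_add \<times> (int ^ 'n::finite) \<Rightarrow> 'g \<times> (int ^ 'n) \<Rightarrow> bool"
    and F :: "'n \<Rightarrow> 'g \<times> (int ^ 'n) \<Rightarrow> 'k::field"
    and \<phi> :: "int ^ 'n \<Rightarrow> 'g \<Rightarrow> 'k"
  assumes toa: "toa_order le"
    and F_hahn: "\<And>i. hahn le (F i)"
    and F_nz: "\<And>i. F i \<noteq> (\<lambda>_. 0)"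
    and jac: "jacobian_number le F \<noteq> 0"
    and \<phi>_hahn: "\<And>k. hahn (\<lambda>g h. le (g, 0) (h, 0)) (\<phi> k)"
  shows "(hahn (\<lambda>a b. le (fmap le F a) (fmap le F b)) (\<lambda>(g, k). \<phi> k g)
          \<longleftrightarrow> strictly_converges le (subst_term le \<phi> (\<lambda>i. init_term le (F i))))
       \<and> (strictly_converges le (subst_term le \<phi> (\<lambda>i. init_term le (F i)))
          \<longrightarrow> strictly_converges le (subst_term le \<phi> F))"
proof -
  have T: "toa le" using toa by (rule toa_from)
  interpret toa le by (rule T)
  have "det (\<chi> i j. snd (ord le (F i)) $ j) \<noteq> 0"
    using jac unfolding jacobian_number_def xinit[OF T F_hahn F_nz] .
  then have injf: "inj (fmap le F)" by (rule fmap_inj)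
  have supp\<Phi>: "supp (\<lambda>(g, k). \<phi> k g) = {(g, k). \<phi> k g \<noteq> 0}" by (auto simp: supp_def)
  have LW: "hahn (\<lambda>a b. le (fmap le F a) (fmap le F b)) (\<lambda>(g, k). \<phi> k g)
      \<longleftrightarrow> wo_on le (fmap le F ` {(g, k). \<phi> k g \<noteq> 0})"
    unfolding hahn_def supp\<Phi> using wo_pullback wo_pushforward by blast
  have init: "\<And>i. hahn le (init_term le (F i))" "\<And>i. init_term le (F i) \<noteq> (\<lambda>_. 0)"
    "\<And>i. ord le (init_term le (F i)) = ord le (F i)"
    using init_props[OF F_hahn F_nz] by auto
  have 1: "wo_on le (fmap le F ` {(g, k). \<phi> k g \<noteq> 0}) \<Longrightarrow>
      strictly_converges le (subst_term le \<phi> (\<lambda>i. init_term le (F i)))"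
    by (rule P2[OF T init injf])
  have 2: "strictly_converges le (subst_term le \<phi> (\<lambda>i. init_term le (F i))) \<Longrightarrow>
      wo_on le (fmap le F ` {(g, k). \<phi> k g \<noteq> 0})"
    by (rule P1b[OF T F_hahn F_nz injf])
  have 3: "wo_on le (fmap le F ` {(g, k). \<phi> k g \<noteq> 0}) \<Longrightarrow> strictly_converges le (subst_term le \<phi> F)"
    by (rule P2[OF T F_hahn F_nz _ injf]) simp
  show ?thesis using LW 1 2 3 by blast
qed


end
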